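(* Let $((A,\to),\mathrm{obs})$ be a quantitative abstract rewriting system with $\mathrm{obs}:A\to S$, and let $\rightsquigarrow\ \subseteq\ \to$ be a subrelation. Let $t\in A$ and assume: (i) $\rightsquigarrow$ is asymptotically complete for $\to$; (ii) $\mathrm{Lim}(t,\rightsquigarrow)$ contains a unique element, i.e. $\mathrm{Lim}(t,\rightsquigarrow)=\{\mathbf p\}$ for some $\mathbf p\in S$. Then (1) $[\![t]\!]$ is defined, and (2) every maximal $\rightsquigarrow$-sequence from $t$ has limit $[\![t]\!]$, i.e. $t\rightsquigarrow^{\mathrm{obs}}[\![t]\!]$ along each such sequence.
   Context: An abstract rewriting system (ARS) is a pair $(A,\to)$ with $\to\subseteq A\times A$. A $\to$-sequence from $t$ is a finite or infinite sequence $t=t_0\to t_1\to t_2\to\cdots$; it is maximal if it is infinite or ends in a $\to$-normal form (an element with no $\to$-successor); by convention a maximal sequence ending in a normal form $u$ is continued as the constant sequence $u,u,\dots$. An $\omega$-cpo is a poset $(S,\le)$ with least element $\bot$ in which every $\omega$-chain has a supremum. A quantitative ARS (QARS) is $((A,\to),\mathrm{obs})$ where $\mathrm{obs}:A\to S$ maps into an $\omega$-cpo and $t\to s$ implies $\mathrm{obs}(t)\le\mathrm{obs}(s)$. For a relation $R\subseteq\to$ write $t\,R^{\mathrm{obs}}\,\mathbf p$ if there is a maximal $R$-sequence $(t_n)_n$ from $t$ with $\sup_n\mathrm{obs}(t_n)=\mathbf p$; $\mathrm{Lim}(t,R)=\{\mathbf p\mid t\,R^{\mathrm{obs}}\,\mathbf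 p\}$. $[\![t]\!]$ denotes the greatest element of $\mathrm{Lim}(t,\to)$, and is said to be defined when this greatest element exists. A subrelation $\rightsquigarrow\subseteq\to$ is asymptotically complete for $\to$ if for all $t\in A$: $t\to^{\mathrm{obs}}\mathbf q$ implies $t\rightsquigarrow^{\mathrm{obs}}\mathbf p$ for some $\mathbf p$ with $\mathbf q\le\mathbf p$. *)

theory Defs
  imports Main
begin

definition is_lub :: "'b::order set \<Rightarrow> 'b \<Rightarrow> bool" where
  "is_lub X p \<longleftrightarrow> (\<forall>x\<in>X. x \<le> p) \<and> (\<forall>q. (\<forall>x\<in>X. x \<le> q) \<longrightarrow> p \<le> q)"

definition omega_cpo :: "'b::order itself \<Rightarrow> bool" where
  "omega_cpo _ \<longleftrightarrow> (\<exists>b::'b. \<forall>x. b \<le> x) \<and>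
     (\<forall>f::nat \<Rightarrow> 'b. (\<forall>n. f n \<le> f (Suc n)) \<longrightarrow> (\<exists>p. is_lub (range f) p))"

definition qars :: "('a \<Rightarrow> 'a \<Rightarrow> bool) \<Rightarrow> ('a \<Rightarrow> 'b::order) \<Rightarrow> bool" where
  "qars step obs \<longleftrightarrow> omega_cpo TYPE('b) \<and> (\<forall>x y. step x y \<longrightarrow> obs x \<le> obs y)"

definition normal_form :: "('a \<Rightarrow> 'a \<Rightarrow> bool) \<Rightarrow> 'a \<Rightarrow> bool" where
  "normal_form R x \<longleftrightarrow> \<not> (\<exists>y. R x y)"

(* maximal R-sequence from t; a finite one ending in a normal form is continued constantly *)
definition max_seq :: "('a \<Rightarrow> 'a \<Rightarrow> bool) \<Rightarrow> 'a \<Rightarrow> (nat \<Rightarrow> 'a) \<Rightarrow> bool" where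
  "max_seq R t f \<longleftrightarrow> f 0 = t \<and>
     (\<forall>n. R (f n) (f (Suc n)) \<or> (normal_form R (f n) \<and> f (Suc n) = f n))"

definition lim_rel :: "('a \<Rightarrow> 'a \<Rightarrow> bool) \<Rightarrow> ('a \<Rightarrow> 'b::order) \<Rightarrow> 'a \<Rightarrow> 'b \<Rightarrow> bool" where
  "lim_rel R obs t p \<longleftrightarrow> (\<exists>f. max_seq R t f \<and> is_lub (range (obs \<circ> f)) p)"

definition Lim :: "('a \<Rightarrow> 'a \<Rightarrow> bool) \<Rightarrow> ('a \<Rightarrow> 'b::order) \<Rightarrow> 'a \<Rightarrow> 'b set" where
  "Lim R obs t = {p. lim_rel R obs t p}"

definition is_greatest :: "'b::order set \<Rightarrow> 'b \<Rightarrow> bool" where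
  "is_greatest X g \<longleftrightarrow> g \<in> X \<and> (\<forall>q\<in>X. q \<le> g)"

definition sem_defined :: "('a \<Rightarrow> 'a \<Rightarrow> bool) \<Rightarrow> ('a \<Rightarrow> 'b::order) \<Rightarrow> 'a \<Rightarrow> bool" where
  "sem_defined step obs t \<longleftrightarrow> (\<exists>g. is_greatest (Lim step obs t) g)"

definition sem :: "('a \<Rightarrow> 'a \<Rightarrow> bool) \<Rightarrow> ('a \<Rightarrow> 'b::order) \<Rightarrow> 'a \<Rightarrow> 'b" where
  "sem step obs t = (THE g. is_greatest (Lim step obs t) g)"

definition asympt_complete :: "('a \<Rightarrow> 'a \<Rightarrow> bool) \<Rightarrow> ('a \<Rightarrow> 'a \<Rightarrow> bool) \<Rightarrow> ('a \<Rightarrow> 'b::order) \<Rightarrow> bool" where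
  "asympt_complete sub step obs \<longleftrightarrow>
     (\<forall>u q. lim_rel step obs u q \<longrightarrow> (\<exists>p. lim_rel sub obs u p \<and> q \<le> p))"

end

theory Submission
  imports Defs
begin

lemma chain_lub:
  assumes "qars step obs"
    and "\<forall>n. step (f n) (f (Suc n)) \<or> f (Suc n) = f n"
  shows "\<exists>p. is_lub (range (obs \<circ> f)) p"
proof -
  have "\<forall>n. (obs \<circ> f) n \<le> (obs \<circ> f) (Suc n)"
    using assms unfolding qars_def by (metis comp_apply order_refl)
  then show ?thesis using assms(1) unfolding qars_def omega_cpo_def by blast
qed

lemma max_exists: "\<exists>h. max_seq step u h"
proof -
  define h where "h = rec_nat u (\<lambda>_ x. if \<exists>y. step x y then SOME y. step x y else x)"
  have "max_seq step u h"
    unfolding max_seq_def normal_form_def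
  proof (intro conjI allI)
    show "h 0 = u" by (simp add: h_def)
    fix n
    show "step (h n) (h (Suc n)) \<or> \<not> (\<exists>y. step (h n) y) \<and> h (Suc n) = h n"
      by (simp add: h_def) (metis someI_ex)
  qed
  then show ?thesis by blast
qed

lemma nf_const:
  assumes "max_seq sub t f" and "normal_form sub (f N)"
  shows "f (N + k) = f N"
proof (induction k)
  case 0 then show ?case by simp
next
  case (Suc k)
  then show ?case using assms unfolding max_seq_def normal_form_def
    by (metis add_Suc_right)
qed

lemma extend:
  assumes "max_seq sub t f" and "\<forall>x y. sub x y \<longrightarrow> step x y"
  shows "\<exists>g. max_seq step t g \<and> (\<forall>n. \<exists>m. f n = g m)"
proof (cases "\<exists>N. normal_form sub (f N)")
  case False
  then have "max_seq step t f" using assms unfolding max_seq_def by blast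
  then show ?thesis by blast
next
  case True
  define N where "N = (LEAST N. normal_form sub (f N))"
  have nfN: "normal_form sub (f N)" unfolding N_def using True by (metis LeastI)
  have lt: "n < N \<Longrightarrow> sub (f n) (f (Suc n))" for n
    using not_less_Least[of n "\<lambda>N. normal_form sub (f N)"] assms(1)
    unfolding N_def max_seq_def by blast
  obtain h where h: "max_seq step (f N) h" using max_exists[of step "f N"] by blast
  define g where "g n = (if n \<le> N then f n else h (n - N))" for n
  have "max_seq step t g"
    unfolding max_seq_def
  proof (intro conjI allI)
    show "g 0 = t" using assms(1) by (simp add: g_def max_seq_def)
    fix n
    show "step (g n) (g (Suc n)) \<or> normal_form step (g n) \<and> g (Suc n) = g n"
    proof (cases "n < N")
      case True then show ?thesis using lt assms(2) by (simp add: g_def)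
    next
      case False
      then obtain k where k: "n = N + k" by (metis le_Suc_ex not_less)
      have "g n = h k" using h unfolding g_def max_seq_def k by auto
      moreover have "g (Suc n) = h (Suc k)" unfolding g_def k by (simp add: Suc_diff_le)
      ultimately show ?thesis using h unfolding max_seq_def by simp
    qed
  qed
  moreover have "\<exists>m. f n = g m" for n
  proof (cases "n \<le> N")
    case True then show ?thesis by (metis g_def)
  next
    case False
    then obtain k where "n = N + k" by (metis le_Suc_ex nat_le_linear)
    then have "f n = f N" using nf_const[OF assms(1) nfN] by simp
    then show ?thesis by (metis g_def order_refl)
  qed
  ultimately show ?thesis by blast
qed

lemma lub_unique:
  assumes "is_lub X p" "is_lub X q" shows "p = (q::'b::order)"
  using assms unfolding is_lub_def by (meson order_antisym)

theorem mainTheorem1: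
  fixes step sub :: "'a \<Rightarrow> 'a \<Rightarrow> bool" and obs :: "'a \<Rightarrow> 'b::order" and t :: 'a
  assumes "qars step obs"
    and "\<forall>x y. sub x y \<longrightarrow> step x y"
    and "asympt_complete sub step obs"
    and "\<exists>p. Lim sub obs t = {p}"
  shows "sem_defined step obs t \<and>
         (\<forall>f. max_seq sub t f \<longrightarrow> is_lub (range (obs \<circ> f)) (sem step obs t))"
proof -
  obtain p where p: "Lim sub obs t = {p}" using assms(4) by blast
  have lp: "lim_rel sub obs t p'  \<longleftrightarrow> p' = p" for p' using p unfolding Lim_def by blast
  obtain f0 where f0: "max_seq sub t f0" "is_lub (range (obs \<circ> f0)) p"
    using lp[of p] unfolding lim_rel_def by blast
  obtain g where g: "max_seq step t g" "\<forall>n. \<exists>m. f0 n = g m"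
    using extend[OF f0(1) assms(2)] by blast
  obtain q where q: "is_lub (range (obs \<circ> g)) q"
    using chain_lub[OF assms(1), of g] g(1) unfolding max_seq_def by blast
  have qL: "lim_rel step obs t q" using g q unfolding lim_rel_def by blast
  have le: "q' \<le> p" if qq: "lim_rel step obs t q'" for q'
  proof -
    obtain p' where "lim_rel sub obs t p'" "q' \<le> p'"
      using qq assms(3) unfolding asympt_complete_def by blast
    then show ?thesis using lp[of p'] by simp
  qed
  have "p \<le> q"
  proof -
    have "\<forall>x\<in>range (obs \<circ> f0). x \<le> q"
    proof
      fix x assume "x \<in> range (obs \<circ> f0)"
      then obtain n where n: "x = obs (f0 n)" by auto
      obtain m where "f0 n = g m" using g(2) by blast
      then have "x = (obs \<circ> g) m" using n by simp
      then show "x \<le> q" using q unfolding is_lub_def by blast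
    qed
    then show ?thesis using f0(2) unfolding is_lub_def by blast
  qed
  then have "q = p" using le[OF qL] by simp
  then have gr: "is_greatest (Lim step obs t) p"
    using qL le unfolding is_greatest_def Lim_def by blast
  have sem: "sem step obs t = p"
    unfolding sem_def
  proof (rule the_equality)
    show "is_greatest (Lim step obs t) p" by (rule gr)
    fix x assume "is_greatest (Lim step obs t) x"
    then show "x = p" using gr unfolding is_greatest_def by (meson order_antisym)
  qed
  have "is_lub (range (obs \<circ> f)) p" if f: "max_seq sub t f" for f
  proof -
    obtain r where r: "is_lub (range (obs \<circ> f)) r"
      using chain_lub[OF assms(1), of f] f assms(2) unfolding max_seq_def by blast
    then have "lim_rel sub obs t r" using f unfolding lim_rel_def by blast
    then have "r = p" using lp[of r] by simp
    then show ?thesis using r by simp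
  qed
  then show ?thesis using gr sem unfolding sem_defined_def by auto
qed

end
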